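(* Let $(\mathcal{S},\mathcal{A},P,r)$ be an MDP with finite state and action spaces and $r\in[0,1]$, let $\gamma\in(0,1)$, and let $\pi$ be a stationary policy whose gain $\rho^\pi$ is a constant vector. Then $\|\frac1{1-\gamma}\rho^\pi-V^\pi_\gamma\|_\infty\le\|h^\pi\|_{\mathrm{sp}}$ and $\|V^\pi_\gamma\|_{\mathrm{sp}}\le2\|h^\pi\|_{\mathrm{sp}}$.
   Context: $V^\pi_\gamma(s)=\mathbb{E}^\pi_s[\sum_{t\ge0}\gamma^tr(S_t,A_t)]$. Gain $\rho^\pi(s)=\lim_T\frac1T\mathbb{E}^\pi_s[\sum_{t<T}r(S_t,A_t)]$; bias $h^\pi(s)=\mathrm{C}\text{-}\lim_T\mathbb{E}^\pi_s[\sum_{t<T}(r(S_t,A_t)-\rho^\pi(S_t))]$ (Cesàro limit). $\|x\|_{\mathrm{sp}}=\max_sx(s)-\min_sx(s)$. *)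

theory Defs
  imports "HOL-Analysis.Analysis"
begin

definition stochastic_kernel :: "('s::finite \<Rightarrow> 'a::finite \<Rightarrow> 's \<Rightarrow> real) \<Rightarrow> bool" where
  "stochastic_kernel P \<longleftrightarrow> (\<forall>s a s'. 0 \<le> P s a s') \<and> (\<forall>s a. (\<Sum>s'\<in>UNIV. P s a s') = 1)"

definition stationary_policy :: "('s::finite \<Rightarrow> 'a::finite \<Rightarrow> real) \<Rightarrow> bool" where
  "stationary_policy pol \<longleftrightarrow> (\<forall>s a. 0 \<le> pol s a) \<and> (\<forall>s. (\<Sum>a\<in>UNIV. pol s a) = 1)"

text \<open>Probability that S_t = s' when starting in s and following pol.\<close>
fun state_dist :: "('s::finite \<Rightarrow> 'a::finite \<Rightarrow> 's \<Rightarrow> real) \<Rightarrow> ('s \<Rightarrow> 'a \<Rightarrow> real) \<Rightarrow> nat \<Rightarrow> 's \<Rightarrow> 's \<Rightarrow> real" where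
  "state_dist P pol 0 s s' = (if s' = s then 1 else 0)"
| "state_dist P pol (Suc n) s s' =
     (\<Sum>u\<in>UNIV. state_dist P pol n s u * (\<Sum>a\<in>UNIV. pol u a * P u a s'))"

text \<open>E^pol_s [ f(S_t, A_t) ].\<close>
definition expect_at :: "('s::finite \<Rightarrow> 'a::finite \<Rightarrow> 's \<Rightarrow> real) \<Rightarrow> ('s \<Rightarrow> 'a \<Rightarrow> real) \<Rightarrow> ('s \<Rightarrow> 'a \<Rightarrow> real) \<Rightarrow> nat \<Rightarrow> 's \<Rightarrow> real" where
  "expect_at P pol f t s = (\<Sum>s'\<in>UNIV. state_dist P pol t s s' * (\<Sum>a\<in>UNIV. pol s' a * f s' a))"

definition disc_value :: "('s::finite \<Rightarrow> 'a::finite \<Rightarrow> 's \<Rightarrow> real) \<Rightarrow> ('s \<Rightarrow> 'a \<Rightarrow> real) \<Rightarrow> ('s \<Rightarrow> 'a \<Rightarrow> real) \<Rightarrow> real \<Rightarrow> 's \<Rightarrow> real" where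
  "disc_value P r pol \<gamma> s = (\<Sum>t. \<gamma> ^ t * expect_at P pol r t s)"

definition gain :: "('s::finite \<Rightarrow> 'a::finite \<Rightarrow> 's \<Rightarrow> real) \<Rightarrow> ('s \<Rightarrow> 'a \<Rightarrow> real) \<Rightarrow> ('s \<Rightarrow> 'a \<Rightarrow> real) \<Rightarrow> 's \<Rightarrow> real" where
  "gain P r pol s = lim (\<lambda>T. (\<Sum>t<T. expect_at P pol r t s) / real T)"

definition cesaro_lim :: "(nat \<Rightarrow> real) \<Rightarrow> real" where
  "cesaro_lim x = lim (\<lambda>N. (\<Sum>T=1..N. x T) / real N)"

definition bias :: "('s::finite \<Rightarrow> 'a::finite \<Rightarrow> 's \<Rightarrow> real) \<Rightarrow> ('s \<Rightarrow> 'a \<Rightarrow> real) \<Rightarrow> ('s \<Rightarrow> 'a \<Rightarrow> real) \<Rightarrow> 's \<Rightarrow> real" where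
  "bias P r pol s = cesaro_lim (\<lambda>T. \<Sum>t<T.
      expect_at P pol (\<lambda>s' a. r s' a - gain P r pol s') t s)"

definition sup_norm :: "('s::finite \<Rightarrow> real) \<Rightarrow> real" where
  "sup_norm x = Max (range (\<lambda>s. \<bar>x s\<bar>))"

definition span_norm :: "('s::finite \<Rightarrow> real) \<Rightarrow> real" where
  "span_norm x = Max (range x) - Min (range x)"

end

theory Submission
  imports Defs
begin

lemma core_vec:
  fixes Q :: "'s::finite \<Rightarrow> 's \<Rightarrow> real" and v :: "real^'s"
  assumes Qnn: "\<And>u s. 0 \<le> Q u s" and Qs: "\<And>u. (\<Sum>s\<in>UNIV. Q u s) = 1"
  defines "T \<equiv> (\<lambda>x::real^'s. \<chi> u. \<Sum>s\<in>UNIV. Q u s * x$s)"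
  shows "\<exists>k w. T k = k \<and> v = k + (w - T w)"
proof -
  note sum.lessThan_Suc[simp del]
  have lin: "linear T"
    by (rule linearI) (auto simp: T_def vec_eq_iff sum.distrib algebra_simps sum_distrib_left)
  have bnd: "\<forall>i. \<bar>T x $ i\<bar> \<le> B" if "\<forall>i. \<bar>x$i\<bar> \<le> B" for x B
  proof
    fix i
    have "\<bar>T x $ i\<bar> \<le> (\<Sum>s\<in>UNIV. \<bar>Q i s * x$s\<bar>)" unfolding T_def by (simp add: sum_abs)
    also have "\<dots> \<le> (\<Sum>s\<in>UNIV. Q i s * B)"
      by (intro sum_mono) (simp add: abs_mult Qnn mult_left_mono that)
    also have "\<dots> = B" by (simp add: sum_distrib_right[symmetric] Qs)
    finally show "\<bar>T x $ i\<bar> \<le> B" .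
  qed
  define B where "B = (\<Sum>i\<in>UNIV. \<bar>v$i\<bar>)"
  define Pw where "Pw n = (T^^n) v" for n
  have Pwb: "\<forall>i. \<bar>Pw n $ i\<bar> \<le> B" for n
  proof (induction n)
    case 0 show ?case by (auto simp: Pw_def B_def intro: member_le_sum)
  next
    case (Suc n) thus ?case using bnd by (simp add: Pw_def)
  qed
  have Pwn: "norm (Pw n) \<le> CARD('s) * B" for n
  proof -
    have "norm (Pw n) \<le> (\<Sum>i\<in>UNIV. \<bar>Pw n$i\<bar>)" by (rule norm_le_l1_cart)
    also have "\<dots> \<le> CARD('s) * B" using sum_bounded_above[of UNIV "\<lambda>i. \<bar>Pw n$i\<bar>" B] Pwb by auto
    finally show ?thesis .
  qed
  define A where "A N = (1 / real (Suc N)) *\<^sub>R (\<Sum>t<Suc N. Pw t)" for N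
  have Ab: "norm (A N) \<le> CARD('s) * B" for N
  proof -
    have "norm (\<Sum>t<Suc N. Pw t) \<le> (\<Sum>t<Suc N. CARD('s) * B)"
      by (rule sum_norm_le) (use Pwn in auto)
    then have "norm (\<Sum>t<Suc N. Pw t) \<le> real (Suc N) * (CARD('s) * B)" by (simp del: sum.lessThan_Suc of_nat_Suc)
    moreover have "norm (A N) = norm (\<Sum>t<Suc N. Pw t) / real (Suc N)"
      by (simp add: A_def del: sum.lessThan_Suc of_nat_Suc)
    ultimately show ?thesis by (simp add: divide_le_eq mult.commute del: sum.lessThan_Suc of_nat_Suc)

  qed
  have "bounded (range A)" using Ab by (auto simp: bounded_iff)
  then obtain k \<sigma> where sm: "strict_mono \<sigma>" and lim: "(A \<circ> \<sigma>) \<longlonglongrightarrow> k"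
    using bounded_imp_convergent_subsequence by blast
  have TPw: "T (Pw t) = Pw (Suc t)" for t by (simp add: Pw_def)
  have TA: "T (A N) - A N = (1 / real (Suc N)) *\<^sub>R (Pw (Suc N) - Pw 0)" for N
  proof -
    have "T (A N) = (1 / real (Suc N)) *\<^sub>R (\<Sum>t<Suc N. Pw (Suc t))"
      by (simp add: A_def linear_scale[OF lin] linear_sum[OF lin] TPw)
    moreover have "(\<Sum>t<Suc N. Pw (Suc t)) - (\<Sum>t<Suc N. Pw t) = Pw (Suc N) - Pw 0"
      by (simp only: sum_subtractf[symmetric] sum_lessThan_telescope)
    ultimately show ?thesis by (simp add: A_def scaleR_diff_right[symmetric])
  qed
  have "(\<lambda>N. T (A N) - A N) \<longlonglongrightarrow> 0"
  proof (rule tendsto_norm_zero_cancel, rule Lim_null_comparison)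
    show "\<forall>\<^sub>F N in sequentially. norm (norm (T (A N) - A N)) \<le> (2 * CARD('s) * B) / real (Suc N)"
    proof (intro always_eventually allI)
      fix N
      have "norm (Pw (Suc N) - Pw 0) \<le> norm (Pw (Suc N)) + norm (Pw 0)" by (rule norm_triangle_ineq4)
      also have "\<dots> \<le> 2 * CARD('s) * B" using Pwn[of "Suc N"] Pwn[of 0] by simp
      finally show "norm (norm (T (A N) - A N)) \<le> (2 * CARD('s) * B) / real (Suc N)"
        by (simp add: TA divide_right_mono)
    qed
    show "(\<lambda>N. (2 * CARD('s) * B) / real (Suc N)) \<longlonglongrightarrow> 0"
      using tendsto_mult_left_zero[OF LIMSEQ_inverse_real_of_nat, of "2 * CARD('s) * B"]
      by (simp add: divide_inverse mult.commute)
  qed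
  then have l2: "(\<lambda>n. T (A (\<sigma> n)) - A (\<sigma> n)) \<longlonglongrightarrow> 0"
    using LIMSEQ_subseq_LIMSEQ[OF _ sm] by (simp add: o_def)
  have cT: "isCont T x" for x using lin by (simp add: linear_continuous_at linear_conv_bounded_linear continuous_at_imp_continuous_at_within)
  have l3: "(\<lambda>n. T (A (\<sigma> n))) \<longlonglongrightarrow> T k"
    using isCont_tendsto_compose[OF cT lim] by (simp add: o_def)
  have "(\<lambda>n. T (A (\<sigma> n)) - A (\<sigma> n)) \<longlonglongrightarrow> T k - k"
    using tendsto_diff[OF l3 lim] by (simp add: o_def)
  with l2 have Tk: "T k = k" using LIMSEQ_unique by fastforce
  define R where "R = range (\<lambda>x. x - T x)"
  have "subspace R"
    unfolding subspace_def R_def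
  proof (intro conjI ballI allI)
    show "0 \<in> range (\<lambda>x. x - T x)" by (rule range_eqI[of _ _ 0]) (simp add: linear_0[OF lin])
  next
    fix x y assume "x \<in> range (\<lambda>x. x - T x)" "y \<in> range (\<lambda>x. x - T x)"
    then obtain a b where "x = a - T a" "y = b - T b" by auto
    then show "x + y \<in> range (\<lambda>x. x - T x)"
      by (intro range_eqI[of _ _ "a + b"]) (simp add: linear_add[OF lin] algebra_simps)
  next
    fix c and x :: "real^'s" assume "x \<in> range (\<lambda>x. x - T x)"
    then obtain a where "x = a - T a" by auto
    then show "c *\<^sub>R x \<in> range (\<lambda>x. x - T x)"
      by (intro range_eqI[of _ _ "c *\<^sub>R a"]) (simp add: linear_scale[OF lin] scaleR_diff_right)
  qed
  then have cR: "closed R" by (rule closed_subspace)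
  define W where "W t = (\<Sum>s<t. Pw s)" for t
  have W: "W t - T (W t) = v - Pw t" for t
  proof -
    have "T (W t) = (\<Sum>s<t. Pw (Suc s))" by (simp add: W_def linear_sum[OF lin] TPw)
    then have "W t - T (W t) = - ((\<Sum>s<t. Pw (Suc s)) - (\<Sum>s<t. Pw s))" by (simp add: W_def)
    also have "\<dots> = v - Pw t" by (simp only: sum_subtractf[symmetric] sum_lessThan_telescope) (simp add: Pw_def)
    finally show ?thesis .
  qed
  have inR: "v - A N \<in> R" for N
  proof -
    define U where "U = (1 / real (Suc N)) *\<^sub>R (\<Sum>t<Suc N. W t)"
    have "U - T U = (1 / real (Suc N)) *\<^sub>R (\<Sum>t<Suc N. W t - T (W t))"
      by (simp add: U_def linear_scale[OF lin] linear_sum[OF lin] sum_subtractf scaleR_diff_right)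
    also have "\<dots> = (1 / real (Suc N)) *\<^sub>R (\<Sum>t<Suc N. v - Pw t)" by (simp add: W)
    also have "\<dots> = v - A N"
      by (simp add: A_def sum_subtractf scaleR_diff_right sum_constant_scaleR del: of_nat_Suc sum_constant)
    finally show ?thesis unfolding R_def by (metis rangeI)
  qed
  have "(\<lambda>n. v - A (\<sigma> n)) \<longlonglongrightarrow> v - k" using tendsto_diff[OF tendsto_const lim] by (simp add: o_def)
  then have "v - k \<in> R" using cR inR by (intro Lim_in_closed_set[of R]) auto
  then obtain w where "v - k = w - T w" by (auto simp: R_def)
  then have "v = k + (w - T w)" by (simp add: algebra_simps)
  with Tk show ?thesis by blast
qed

definition Mop :: "('s::finite \<Rightarrow> 's \<Rightarrow> real) \<Rightarrow> ('s \<Rightarrow> real) \<Rightarrow> 's \<Rightarrow> real" where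
  "Mop Q g u = (\<Sum>s\<in>UNIV. Q u s * g s)"

lemma core_fun:
  fixes Q :: "'s::finite \<Rightarrow> 's \<Rightarrow> real" and v :: "'s \<Rightarrow> real"
  assumes Qnn: "\<And>u s. 0 \<le> Q u s" and Qs: "\<And>u. (\<Sum>s\<in>UNIV. Q u s) = 1"
  shows "\<exists>k w. Mop Q k = k \<and> (\<forall>u. v u = k u + w u - Mop Q w u)"
proof -
  obtain k w where kw: "(\<chi> u. \<Sum>s\<in>UNIV. Q u s * k$s) = k"
    "(\<chi> u. v u) = k + (w - (\<chi> u. \<Sum>s\<in>UNIV. Q u s * w$s))"
    using core_vec[where Q=Q and v="\<chi> u. v u", OF Qnn Qs] by blast
  have "Mop Q (\<lambda>u. k$u) = (\<lambda>u. k$u)"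
    using kw(1) by (auto simp: Mop_def vec_eq_iff fun_eq_iff)
  moreover have "\<forall>u. v u = k$u + w$u - Mop Q (\<lambda>u. w$u) u"
    using kw(2) by (auto simp: Mop_def vec_eq_iff)
  ultimately show ?thesis by blast
qed

lemma Mop_add: "Mop Q (\<lambda>u. a u + b u) = (\<lambda>u. Mop Q a u + Mop Q b u)"
  by (simp add: Mop_def fun_eq_iff algebra_simps sum.distrib)
lemma Mop_diff: "Mop Q (\<lambda>u. a u - b u) = (\<lambda>u. Mop Q a u - Mop Q b u)"
  by (simp add: Mop_def fun_eq_iff algebra_simps sum_subtractf)

lemma pow_add: "(Mop Q ^^ n) (\<lambda>u. a u + b u) x = (Mop Q ^^ n) a x + (Mop Q ^^ n) b x"
proof (induction n arbitrary: x)
  case 0 then show ?case by simp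
next
  case (Suc n)
  have "(Mop Q ^^ n) (\<lambda>u. a u + b u) = (\<lambda>x. (Mop Q ^^ n) a x + (Mop Q ^^ n) b x)"
    using Suc by auto
  then show ?case by (simp add: Mop_add)
qed

lemma pow_diff: "(Mop Q ^^ n) (\<lambda>u. a u - b u) x = (Mop Q ^^ n) a x - (Mop Q ^^ n) b x"
proof (induction n arbitrary: x)
  case 0 then show ?case by simp
next
  case (Suc n)
  have "(Mop Q ^^ n) (\<lambda>u. a u - b u) = (\<lambda>x. (Mop Q ^^ n) a x - (Mop Q ^^ n) b x)"
    using Suc by auto
  then show ?case by (simp add: Mop_diff)
qed

lemma pow_fix: "Mop Q k = k \<Longrightarrow> (Mop Q ^^ n) k = k"
  by (induction n) auto

lemma pow_Suc': "(Mop Q ^^ n) (Mop Q w) = (Mop Q ^^ Suc n) w"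
  by (simp add: funpow_Suc_right del: funpow.simps)

lemma Mop_bound:
  assumes Qnn: "\<And>u s. 0 \<le> Q u s" and Qs: "\<And>u. (\<Sum>s\<in>UNIV. Q u s) = 1"
    and "\<And>u. a \<le> g u \<and> g u \<le> b"
  shows "a \<le> Mop Q g u \<and> Mop Q g u \<le> b"
proof
  have "(\<Sum>s\<in>UNIV. Q u s * a) \<le> Mop Q g u" unfolding Mop_def
    by (intro sum_mono mult_left_mono) (use assms in auto)
  then show "a \<le> Mop Q g u" by (simp add: sum_distrib_right[symmetric] Qs)
  have "Mop Q g u \<le> (\<Sum>s\<in>UNIV. Q u s * b)" unfolding Mop_def
    by (intro sum_mono mult_left_mono) (use assms in auto)
  then show "Mop Q g u \<le> b" by (simp add: sum_distrib_right[symmetric] Qs)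
qed

lemma pow_bound:
  assumes Qnn: "\<And>u s. 0 \<le> Q u s" and Qs: "\<And>u. (\<Sum>s\<in>UNIV. Q u s) = 1"
    and "\<And>u. a \<le> g u \<and> g u \<le> b"
  shows "a \<le> (Mop Q ^^ n) g u \<and> (Mop Q ^^ n) g u \<le> b"
  using assms(3) by (induction n arbitrary: u) (auto intro!: Mop_bound[OF Qnn Qs] simp del: funpow.simps simp: funpow.simps(2) o_def)

lemma tele: "(\<Sum>t<T. k + b t - b (Suc t)) = real T * k + b 0 - (b T :: real)"
  by (induction T) (simp_all add: algebra_simps)

lemma sd_sum:
  "(\<Sum>s'\<in>UNIV. state_dist P pol n s s' * g s') =
     (Mop (\<lambda>u s'. \<Sum>a\<in>UNIV. pol u a * P u a s') ^^ n) g s"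
proof (induction n arbitrary: g)
  case 0 then show ?case
    by (subst sum.cong[OF refl, of _ _ "\<lambda>s'. if s' = s then g s' else 0"]) auto
next
  case (Suc n)
  let ?Q = "\<lambda>u s'. \<Sum>a\<in>UNIV. pol u a * P u a s'"
  have "(\<Sum>s'\<in>UNIV. state_dist P pol (Suc n) s s' * g s')
      = (\<Sum>s'\<in>UNIV. \<Sum>u\<in>UNIV. state_dist P pol n s u * (?Q u s' * g s'))"
    by (simp add: sum_distrib_right mult.assoc)
  also have "\<dots> = (\<Sum>u\<in>UNIV. state_dist P pol n s u * Mop ?Q g u)"
    by (subst sum.swap) (simp add: Mop_def sum_distrib_left)
  also have "\<dots> = (Mop ?Q ^^ n) (Mop ?Q g) s" by (rule Suc)
  also have "\<dots> = (Mop ?Q ^^ Suc n) g s" by (rule fun_cong[OF pow_Suc'])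
  finally show ?case .
qed

lemma expect_pow:
  "expect_at P pol f t s =
     (Mop (\<lambda>u s'. \<Sum>a\<in>UNIV. pol u a * P u a s') ^^ t) (\<lambda>u. \<Sum>a\<in>UNIV. pol u a * f u a) s"
  unfolding expect_at_def by (rule sd_sum)

lemma avg_lim:
  fixes b :: "nat \<Rightarrow> real"
  assumes "\<And>T. \<bar>b T\<bar> \<le> B"
  shows "(\<lambda>T. (real T * k + x - b T) / real T) \<longlonglongrightarrow> k"
proof -
  have "(\<lambda>T. (x - b T) / real T) \<longlonglongrightarrow> 0"
  proof (rule Lim_null_comparison)
    show "\<forall>\<^sub>F T in sequentially. norm ((x - b T) / real T) \<le> (\<bar>x\<bar> + B) / real T"
    proof (intro always_eventually allI)
      fix T
      have "\<bar>x - b T\<bar> \<le> \<bar>x\<bar> + B" using assms[of T] by linarith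
      then show "norm ((x - b T) / real T) \<le> (\<bar>x\<bar> + B) / real T"
        by (simp add: divide_right_mono)
    qed
    show "(\<lambda>T. (\<bar>x\<bar> + B) / real T) \<longlonglongrightarrow> 0" by (rule lim_const_over_n)
  qed
  then have "(\<lambda>T. k + (x - b T) / real T) \<longlonglongrightarrow> k + 0" by (intro tendsto_add tendsto_const)
  then have "(\<lambda>T. k + (x - b T) / real T) \<longlonglongrightarrow> k" by simp
  moreover have "\<forall>\<^sub>F T in sequentially. k + (x - b T) / real T = (real T * k + x - b T) / real T"
    by (intro eventually_sequentiallyI[of 1]) (simp add: field_simps)
  ultimately show ?thesis by (rule Lim_transform_eventually)
qed

theorem lemma25:
  fixes P :: "'s::finite \<Rightarrow> 'a::finite \<Rightarrow> 's \<Rightarrow> real"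
    and r :: "'s \<Rightarrow> 'a \<Rightarrow> real"
    and pol :: "'s \<Rightarrow> 'a \<Rightarrow> real"
    and \<gamma> :: real
  assumes "stochastic_kernel P"
    and "\<And>s a. 0 \<le> r s a \<and> r s a \<le> 1"
    and "0 < \<gamma>" and "\<gamma> < 1"
    and "stationary_policy pol"
    and "\<exists>c. \<forall>s. gain P r pol s = c"
  shows "sup_norm (\<lambda>s. gain P r pol s / (1 - \<gamma>) - disc_value P r pol \<gamma> s)
           \<le> span_norm (bias P r pol)
       \<and> span_norm (disc_value P r pol \<gamma>) \<le> 2 * span_norm (bias P r pol)"
proof -
  define Q where "Q = (\<lambda>u s'. \<Sum>a\<in>UNIV. pol u a * P u a s')"
  have Pnn: "\<And>s a s'. 0 \<le> P s a s'" and Ps: "\<And>s a. (\<Sum>s'\<in>UNIV. P s a s') = 1"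
    using assms(1) by (auto simp: stochastic_kernel_def)
  have pnn: "\<And>s a. 0 \<le> pol s a" and ps: "\<And>s. (\<Sum>a\<in>UNIV. pol s a) = 1"
    using assms(5) by (auto simp: stationary_policy_def)
  have Qnn: "\<And>u s. 0 \<le> Q u s" unfolding Q_def by (intro sum_nonneg mult_nonneg_nonneg pnn Pnn)
  have Qs: "\<And>u. (\<Sum>s\<in>UNIV. Q u s) = 1"
    unfolding Q_def by (subst sum.swap) (simp add: sum_distrib_left[symmetric] Ps ps)
  define Op where "Op = Mop Q"
  have EX: "expect_at P pol f t s = (Op^^t) (\<lambda>u. \<Sum>a\<in>UNIV. pol u a * f u a) s" for f t s
    unfolding Op_def Q_def by (rule expect_pow)
  have bnd: "\<exists>B. \<forall>n s. \<bar>(Op^^n) g s\<bar> \<le> B" for g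
  proof -
    define B where "B = (\<Sum>u\<in>UNIV. \<bar>g u\<bar>)"
    have gB: "\<bar>g u\<bar> \<le> B" for u unfolding B_def by (rule member_le_sum) auto
    have "-B \<le> g u \<and> g u \<le> B" for u using gB[of u] by linarith
    then have "-B \<le> (Op^^n) g s \<and> (Op^^n) g s \<le> B" for n s
      unfolding Op_def by (rule pow_bound[OF Qnn Qs])
    then show ?thesis by (metis abs_le_iff minus_le_iff)
  qed
  define rp where "rp = (\<lambda>u. \<Sum>a\<in>UNIV. pol u a * r u a)"
  obtain k w where k: "Op k = k" and kw: "\<forall>u. rp u = k u + w u - Op w u"
    using core_fun[where Q=Q and v=rp, OF Qnn Qs] unfolding Op_def by blast
  obtain Bw where Bw: "\<And>n s. \<bar>(Op^^n) w s\<bar> \<le> Bw" using bnd by blast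
  have rp_eq: "rp = (\<lambda>u. (k u + w u) - Op w u)" using kw by auto
  have pw_rp: "(Op^^t) rp s = k s + (Op^^t) w s - (Op^^Suc t) w s" for t s
    unfolding rp_eq Op_def
    by (simp only: pow_diff pow_add pow_fix[OF k[unfolded Op_def]] pow_Suc')
  have gk: "gain P r pol s = k s" for s
  proof -
    have "(\<Sum>t<T. expect_at P pol r t s) = real T * k s + w s - (Op^^T) w s" for T
      using tele[where T=T and k="k s" and b="\<lambda>t. (Op^^t) w s"] by (simp add: EX pw_rp[unfolded rp_def])
    then show ?thesis unfolding gain_def
      by (simp add: limI[OF avg_lim[OF Bw]])
  qed
  obtain c where gc: "\<And>s. gain P r pol s = c" using assms(6) by blast
  have kc: "k s = c" for s using gk gc by metis
  obtain k2 w2 where k2: "Op k2 = k2" and kw2: "\<forall>u. w u = k2 u + w2 u - Op w2 u"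
    using core_fun[where Q=Q and v=w, OF Qnn Qs] unfolding Op_def by blast
  obtain Bw2 where Bw2: "\<And>n s. \<bar>(Op^^n) w2 s\<bar> \<le> Bw2" using bnd by blast
  have w_eq: "w = (\<lambda>u. (k2 u + w2 u) - Op w2 u)" using kw2 by auto
  have pw_w: "(Op^^t) w s = k2 s + (Op^^t) w2 s - (Op^^Suc t) w2 s" for t s
    unfolding w_eq Op_def
    by (simp only: pow_diff pow_add pow_fix[OF k2[unfolded Op_def]] pow_Suc')
  have bias_inner: "(\<lambda>u. \<Sum>a\<in>UNIV. pol u a * (r u a - gain P r pol u)) = (\<lambda>u. w u - Op w u)"
  proof
    fix u
    have "(\<Sum>a\<in>UNIV. pol u a * (r u a - gain P r pol u)) = rp u - c * (\<Sum>a\<in>UNIV. pol u a)"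
      by (simp add: rp_def gc algebra_simps sum_subtractf sum_distrib_left sum_distrib_right)
    also have "\<dots> = w u - Op w u" using kw kc by (simp add: ps)
    finally show "(\<Sum>a\<in>UNIV. pol u a * (r u a - gain P r pol u)) = w u - Op w u" .
  qed
  have xT: "(\<Sum>t<T. expect_at P pol (\<lambda>s' a. r s' a - gain P r pol s') t s) = w s - (Op^^T) w s" for T s
  proof -
    have "(\<Sum>t<T. expect_at P pol (\<lambda>s' a. r s' a - gain P r pol s') t s)
        = (\<Sum>t<T. 0 + (Op^^t) w s - (Op^^Suc t) w s)"
      unfolding EX bias_inner unfolding Op_def by (simp only: pow_diff pow_Suc' add_0_left)
    also have "\<dots> = w s - (Op^^T) w s"
      using tele[where T=T and k=0 and b="\<lambda>t. (Op^^t) w s"] by simp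
    finally show ?thesis .
  qed
  define h where "h = bias P r pol"
  have hw: "h s = w s - k2 s" for s
  proof -
    define d where "d T = (Op^^T) w2 s" for T
    have S: "(\<Sum>T=1..N. w s - (Op^^T) w s) = real N * (w s - k2 s) + (- d 1) - (- d (Suc N))" for N
    proof (induction N)
      case 0 then show ?case by (simp add: d_def)
    next
      case (Suc N)
      then show ?case by (simp add: pw_w d_def algebra_simps)
    qed
    have "\<bar>- d (Suc T)\<bar> \<le> Bw2" for T using Bw2[of "Suc T" s] by (simp add: d_def del: funpow.simps)
    then show ?thesis unfolding h_def bias_def cesaro_lim_def xT S
      by (rule limI[OF avg_lim])
  qed
  have Opc: "Op (\<lambda>u. c) = (\<lambda>u. c)"
    by (simp add: Op_def Mop_def fun_eq_iff sum_distrib_right[symmetric] Qs)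
  have Oph: "Op h u = Op w u - k2 u" for u
  proof -
    have "h = (\<lambda>u. w u - k2 u)" using hw by auto
    then show ?thesis using k2 by (simp add: Op_def Mop_diff)
  qed
  have rp_h: "rp = (\<lambda>u. (c + h u) - Op h u)" using kw kc hw Oph by (auto simp: fun_eq_iff)
  have pw_h: "(Op^^t) rp s = c + (Op^^t) h s - (Op^^Suc t) h s" for t s
    unfolding rp_h Op_def
    by (simp only: pow_diff pow_add pow_fix[OF Opc[unfolded Op_def]] pow_Suc')
  define mh where "mh = Min (range h)"
  define Mh where "Mh = Max (range h)"
  have hb: "mh \<le> h u \<and> h u \<le> Mh" for u unfolding mh_def Mh_def by auto
  have ab: "mh \<le> (Op^^t) h s \<and> (Op^^t) h s \<le> Mh" for t s
    unfolding Op_def by (rule pow_bound[OF Qnn Qs hb])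
  define C where "C = c / (1 - \<gamma>)"
  have disc: "mh \<le> C + h s - disc_value P r pol \<gamma> s \<and>
              C + h s - disc_value P r pol \<gamma> s \<le> Mh" for s
  proof -
    define a where "a t = (Op^^t) h s" for t
    have a0: "a 0 = h s" by (simp add: a_def)
    have ab': "mh \<le> a t \<and> a t \<le> Mh" for t using ab by (simp add: a_def)
    define Ba where "Ba = \<bar>mh\<bar> + \<bar>Mh\<bar>"
    have aB: "\<bar>a t\<bar> \<le> Ba" for t using ab'[of t] unfolding Ba_def by linarith
    have g: "(\<lambda>t. \<gamma>^t) sums (1 / (1 - \<gamma>))" using assms(3,4) by (intro geometric_sums) simp
    have gs: "summable (\<lambda>t. \<gamma>^t * Ba)" using g by (intro summable_mult2) (rule sums_summable)
    have sa: "summable (\<lambda>t. \<gamma>^t * a t)"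
    proof (rule summable_comparison_test[OF _ gs])
      show "\<exists>N. \<forall>n\<ge>N. norm (\<gamma>^n * a n) \<le> \<gamma>^n * Ba"
        using aB assms(3) by (auto simp: abs_mult intro!: mult_left_mono)
    qed
    have sa': "summable (\<lambda>t. \<gamma>^t * a (Suc t))"
    proof (rule summable_comparison_test[OF _ gs])
      show "\<exists>N. \<forall>n\<ge>N. norm (\<gamma>^n * a (Suc n)) \<le> \<gamma>^n * Ba"
        using aB assms(3) by (auto simp: abs_mult intro!: mult_left_mono)
    qed
    define S1 where "S1 = (\<Sum>t. \<gamma>^t * a t)"
    define S2 where "S2 = (\<Sum>t. \<gamma>^t * a (Suc t))"
    have s1: "(\<lambda>t. \<gamma>^t * a t) sums S1" using sa by (simp add: S1_def summable_sums)
    have s2: "(\<lambda>t. \<gamma>^t * a (Suc t)) sums S2" using sa' by (simp add: S2_def summable_sums)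
    have "(\<lambda>t. \<gamma> * (\<gamma>^t * a (Suc t))) sums (\<gamma> * S2)" using s2 by (rule sums_mult)
    then have "(\<lambda>t. \<gamma>^(Suc t) * a (Suc t)) sums (\<gamma> * S2)" by (simp add: mult.assoc)
    then have "(\<lambda>t. \<gamma>^t * a t) sums (\<gamma> * S2 + h s)"
      using sums_Suc_iff[of "\<lambda>t. \<gamma>^t * a t"] a0 by simp
    then have S1: "S1 = \<gamma> * S2 + h s" using s1 sums_unique2 by blast
    have "(\<lambda>t. c * \<gamma>^t + \<gamma>^t * a t - \<gamma>^t * a (Suc t)) sums (c * (1 / (1 - \<gamma>)) + S1 - S2)"
      by (intro sums_diff sums_add sums_mult g s1 s2)
    moreover have "(\<lambda>t. c * \<gamma>^t + \<gamma>^t * a t - \<gamma>^t * a (Suc t)) = (\<lambda>t. \<gamma>^t * expect_at P pol r t s)"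
      by (auto simp: fun_eq_iff EX pw_h[unfolded rp_def] a_def algebra_simps)
    ultimately have "disc_value P r pol \<gamma> s = c / (1 - \<gamma>) + S1 - S2"
      unfolding disc_value_def by (simp add: sums_iff)
    then have D: "c / (1 - \<gamma>) + h s - disc_value P r pol \<gamma> s = (1 - \<gamma>) * S2"
      using S1 by (simp add: algebra_simps)
    have "S2 \<le> (1 / (1 - \<gamma>)) * Mh"
      by (rule sums_le[OF _ s2 sums_mult2[OF g]]) (use ab' assms(3) in \<open>auto intro!: mult_left_mono\<close>)
    moreover have "(1 / (1 - \<gamma>)) * mh \<le> S2"
      by (rule sums_le[OF _ sums_mult2[OF g] s2]) (use ab' assms(3) in \<open>auto intro!: mult_left_mono\<close>)
    ultimately show ?thesis unfolding C_def D using assms(4)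
      by (auto simp: field_simps)
  qed
  have span_h: "span_norm (bias P r pol) = Mh - mh" unfolding span_norm_def h_def mh_def Mh_def ..
  have part1: "sup_norm (\<lambda>s. gain P r pol s / (1 - \<gamma>) - disc_value P r pol \<gamma> s) \<le> Mh - mh"
    unfolding sup_norm_def
  proof (rule Max.boundedI)
    show "finite (range (\<lambda>s. \<bar>gain P r pol s / (1 - \<gamma>) - disc_value P r pol \<gamma> s\<bar>))" by simp
    show "range (\<lambda>s. \<bar>gain P r pol s / (1 - \<gamma>) - disc_value P r pol \<gamma> s\<bar>) \<noteq> {}" by simp
    fix y assume "y \<in> range (\<lambda>s. \<bar>gain P r pol s / (1 - \<gamma>) - disc_value P r pol \<gamma> s\<bar>)"
    then obtain s where y: "y = \<bar>C - disc_value P r pol \<gamma> s\<bar>" using gc by (auto simp: C_def)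
    show "y \<le> Mh - mh" using disc[of s] hb[of s] unfolding y by (simp add: abs_le_iff)
  qed
  have part2: "span_norm (disc_value P r pol \<gamma>) \<le> 2 * (Mh - mh)"
  proof -
    have fin: "finite (range (disc_value P r pol \<gamma>))" by simp
    have ne: "range (disc_value P r pol \<gamma>) \<noteq> {}" by simp
    obtain s1 where s1: "Max (range (disc_value P r pol \<gamma>)) = disc_value P r pol \<gamma> s1"
      using Max_in[OF fin ne] by blast
    obtain s2 where s2: "Min (range (disc_value P r pol \<gamma>)) = disc_value P r pol \<gamma> s2"
      using Min_in[OF fin ne] by blast
    show ?thesis unfolding span_norm_def s1 s2
      using disc[of s1] disc[of s2] hb[of s1] hb[of s2] by (elim conjE) (smt (verit))
  qed
  show ?thesis using part1 part2 span_h by simp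
qed

end
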